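(* Let $\mathcal X=\mathcal X_1\times\cdots\times\mathcal X_n$ with $\mathcal X_i\subseteq\mathbb R^{d_i}$, and let $f_1,\dots,f_m:\mathcal X\to\mathbb R$ be BDC functions (with respect to this block structure). Then the following functions are also BDC: (i) $\sum_{r=1}^m\alpha_r f_r$ for any $\alpha_1,\dots,\alpha_m\in\mathbb R$; (ii) $\max_{r=1,\dots,m} f_r$ (pointwise); (iii) $\min_{r=1,\dots,m} f_r$ (pointwise).
   Context: Block notation: for $\bm\theta\in\mathcal X$, $\theta_i\in\mathcal X_i$ denotes its $i$th block and $\bar{\bm\theta}_i$ denotes the vector obtained from $\bm\theta$ by replacing the $i$th block by $0$; $\bar{\mathcal X}_i=\mathcal X_1\times\cdots\times\{0\}^{d_i}\times\cdots\times\mathcal X_n$. A function $f:\mathcal X\to\mathbb R$ is called BDC (multi-block difference-of-convex) if for every $i\in\{1,\dots,n\}$ there exist functions $g_i,h_i:\mathcal X_i\times\bar{\mathcal X}_i\to\mathbb R$ such that $f(\bm\theta)=g_i(\theta_i;\bar{\bm\theta}_i)-h_i(\theta_i;\bar{\bm\theta}_i)$ for all $\bm\theta\in\mathcal X$, and for every fixed $\bar{\bm\theta}_i$ the functions $g_i(\cdot;\bar{\bm\theta}_i)$ and $h_i(\cdot;\bar{\bm\theta}_i)$ are convex in $\theta_i$. *)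

theory Defs
  imports "HOL-Analysis.Analysis"
begin

text \<open>The coordinates are
partitioned into n blocks B 0, ..., B (n-1); block i is identified with the coordinate
subspace of vectors vanishing outside B i (a copy of R^(d_i), d_i = card (B i)).\<close>

definition is_block_partition :: "nat \<Rightarrow> (nat \<Rightarrow> ('k::finite) set) \<Rightarrow> bool" where
  "is_block_partition n B \<longleftrightarrow>
     (\<forall>i<n. \<forall>j<n. i \<noteq> j \<longrightarrow> B i \<inter> B j = {}) \<and> (\<Union>i<n. B i) = UNIV"

definition blk :: "(nat \<Rightarrow> ('k::finite) set) \<Rightarrow> nat \<Rightarrow> real^'k \<Rightarrow> real^'k" where
  "blk B i \<theta> = (\<chi> j. if j \<in> B i then \<theta> $ j else 0)"

definition bar :: "(nat \<Rightarrow> ('k::finite) set) \<Rightarrow> nat \<Rightarrow> real^'k \<Rightarrow> real^'k" where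
  "bar B i \<theta> = (\<chi> j. if j \<in> B i then 0 else \<theta> $ j)"

definition prodX :: "nat \<Rightarrow> (nat \<Rightarrow> ('k::finite) set) \<Rightarrow> (nat \<Rightarrow> (real^'k) set) \<Rightarrow> (real^'k) set" where
  "prodX n B Xs = {\<theta>. \<forall>i<n. blk B i \<theta> \<in> Xs i}"

definition barX :: "nat \<Rightarrow> (nat \<Rightarrow> ('k::finite) set) \<Rightarrow> (nat \<Rightarrow> (real^'k) set) \<Rightarrow> nat \<Rightarrow> (real^'k) set" where
  "barX n B Xs i = {\<theta>. blk B i \<theta> = 0 \<and> (\<forall>j<n. j \<noteq> i \<longrightarrow> blk B j \<theta> \<in> Xs j)}"

definition BDC :: "nat \<Rightarrow> (nat \<Rightarrow> ('k::finite) set) \<Rightarrow> (nat \<Rightarrow> (real^'k) set) \<Rightarrow> (real^'k \<Rightarrow> real) \<Rightarrow> bool" where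
  "BDC n B Xs f \<longleftrightarrow>
     (\<forall>i<n. \<exists>g h :: real^'k \<Rightarrow> real^'k \<Rightarrow> real.
        (\<forall>\<theta>\<in>prodX n B Xs. f \<theta> = g (blk B i \<theta>) (bar B i \<theta>) - h (blk B i \<theta>) (bar B i \<theta>)) \<and>
        (\<forall>\<theta>b\<in>barX n B Xs i. convex_on (Xs i) (\<lambda>t. g t \<theta>b) \<and> convex_on (Xs i) (\<lambda>t. h t \<theta>b)))"

end

theory Submission
  imports Defs
begin

lemma convex_on_max2:
  assumes "convex_on S f" "convex_on S g"
  shows "convex_on S (\<lambda>x. max (f x) (g x))"
proof -
  have cS: "convex S" using assms(1) convex_on_def by blast
  show ?thesis unfolding convex_on_def
  proof (intro conjI cS ballI allI impI)
    fix x y and u v :: real assume xy: "x \<in> S" "y \<in> S" and u0: "0 \<le> u" and v0: "0 \<le> v" and uv1: "u + v = 1"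
    note uv = u0 v0 uv1
    have "f (u *\<^sub>R x + v *\<^sub>R y) \<le> u * f x + v * f y"
      using assms(1) xy uv unfolding convex_on_def by blast
    also have "\<dots> \<le> u * max (f x) (g x) + v * max (f y) (g y)"
      using uv by (intro add_mono mult_left_mono) auto
    finally have 1: "f (u *\<^sub>R x + v *\<^sub>R y) \<le> u * max (f x) (g x) + v * max (f y) (g y)" .
    have "g (u *\<^sub>R x + v *\<^sub>R y) \<le> u * g x + v * g y"
      using assms(2) xy uv unfolding convex_on_def by blast
    also have "\<dots> \<le> u * max (f x) (g x) + v * max (f y) (g y)"
      using uv by (intro add_mono mult_left_mono) auto
    finally have 2: "g (u *\<^sub>R x + v *\<^sub>R y) \<le> u * max (f x) (g x) + v * max (f y) (g y)" .
    show "max (f (u *\<^sub>R x + v *\<^sub>R y)) (g (u *\<^sub>R x + v *\<^sub>R y)) \<le> u * max (f x) (g x) + v * max (f y) (g y)"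
      using 1 2 by simp
  qed
qed

lemma BDC_add:
  assumes "BDC n B Xs f1" "BDC n B Xs f2"
  shows "BDC n B Xs (\<lambda>\<theta>. f1 \<theta> + f2 \<theta>)"
  unfolding BDC_def
proof (intro allI impI)
  fix i assume i: "i < n"
  obtain g1 h1 where 1: "\<forall>\<theta>\<in>prodX n B Xs. f1 \<theta> = g1 (blk B i \<theta>) (bar B i \<theta>) - h1 (blk B i \<theta>) (bar B i \<theta>)"
    "\<forall>\<theta>b\<in>barX n B Xs i. convex_on (Xs i) (\<lambda>t. g1 t \<theta>b) \<and> convex_on (Xs i) (\<lambda>t. h1 t \<theta>b)"
    using assms(1) i unfolding BDC_def by blast
  obtain g2 h2 where 2: "\<forall>\<theta>\<in>prodX n B Xs. f2 \<theta> = g2 (blk B i \<theta>) (bar B i \<theta>) - h2 (blk B i \<theta>) (bar B i \<theta>)"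
    "\<forall>\<theta>b\<in>barX n B Xs i. convex_on (Xs i) (\<lambda>t. g2 t \<theta>b) \<and> convex_on (Xs i) (\<lambda>t. h2 t \<theta>b)"
    using assms(2) i unfolding BDC_def by blast
  show "\<exists>g h :: real^'a \<Rightarrow> real^'a \<Rightarrow> real.
        (\<forall>\<theta>\<in>prodX n B Xs. f1 \<theta> + f2 \<theta> = g (blk B i \<theta>) (bar B i \<theta>) - h (blk B i \<theta>) (bar B i \<theta>)) \<and>
        (\<forall>\<theta>b\<in>barX n B Xs i. convex_on (Xs i) (\<lambda>t. g t \<theta>b) \<and> convex_on (Xs i) (\<lambda>t. h t \<theta>b))"
    by (rule exI[of _ "\<lambda>t b. g1 t b + g2 t b"], rule exI[of _ "\<lambda>t b. h1 t b + h2 t b"])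
       (use 1 2 in \<open>auto intro!: convex_on_add\<close>)
qed

lemma BDC_cmul:
  assumes "BDC n B Xs f1"
  shows "BDC n B Xs (\<lambda>\<theta>. c * f1 \<theta>)"
  unfolding BDC_def
proof (intro allI impI)
  fix i assume i: "i < n"
  obtain g1 h1 where 1: "\<forall>\<theta>\<in>prodX n B Xs. f1 \<theta> = g1 (blk B i \<theta>) (bar B i \<theta>) - h1 (blk B i \<theta>) (bar B i \<theta>)"
    "\<forall>\<theta>b\<in>barX n B Xs i. convex_on (Xs i) (\<lambda>t. g1 t \<theta>b) \<and> convex_on (Xs i) (\<lambda>t. h1 t \<theta>b)"
    using assms(1) i unfolding BDC_def by blast
  show "\<exists>g h :: real^'a \<Rightarrow> real^'a \<Rightarrow> real.
        (\<forall>\<theta>\<in>prodX n B Xs. c * f1 \<theta> = g (blk B i \<theta>) (bar B i \<theta>) - h (blk B i \<theta>) (bar B i \<theta>)) \<and>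
        (\<forall>\<theta>b\<in>barX n B Xs i. convex_on (Xs i) (\<lambda>t. g t \<theta>b) \<and> convex_on (Xs i) (\<lambda>t. h t \<theta>b))"
  proof (cases "c \<ge> 0")
    case True
    show ?thesis
      by (rule exI[of _ "\<lambda>t b. c * g1 t b"], rule exI[of _ "\<lambda>t b. c * h1 t b"])
         (use 1 True in \<open>auto intro!: convex_on_cmul simp: right_diff_distrib\<close>)
  next
    case False
    show ?thesis
      apply (rule exI[of _ "\<lambda>t b. (-c) * h1 t b"], rule exI[of _ "\<lambda>t b. (-c) * g1 t b"])
    proof (rule conjI; intro ballI)
      fix \<theta> assume "\<theta> \<in> prodX n B Xs"
      then have "f1 \<theta> = g1 (blk B i \<theta>) (bar B i \<theta>) - h1 (blk B i \<theta>) (bar B i \<theta>)" using 1 by blast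
      then show "c * f1 \<theta> = - c * h1 (blk B i \<theta>) (bar B i \<theta>) - - c * g1 (blk B i \<theta>) (bar B i \<theta>)"
        by (simp add: right_diff_distrib)
    next
      fix \<theta>b assume "\<theta>b \<in> barX n B Xs i"
      then have "convex_on (Xs i) (\<lambda>t. g1 t \<theta>b)" "convex_on (Xs i) (\<lambda>t. h1 t \<theta>b)" using 1 by auto
      then show "convex_on (Xs i) (\<lambda>t. - c * h1 t \<theta>b) \<and> convex_on (Xs i) (\<lambda>t. - c * g1 t \<theta>b)"
        using False by (intro conjI convex_on_cmul) auto
    qed
  qed
qed

lemma BDC_max:
  assumes "BDC n B Xs f1" "BDC n B Xs f2"
  shows "BDC n B Xs (\<lambda>\<theta>. max (f1 \<theta>) (f2 \<theta>))"
  unfolding BDC_def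
proof (intro allI impI)
  fix i assume i: "i < n"
  obtain g1 h1 where 1: "\<forall>\<theta>\<in>prodX n B Xs. f1 \<theta> = g1 (blk B i \<theta>) (bar B i \<theta>) - h1 (blk B i \<theta>) (bar B i \<theta>)"
    "\<forall>\<theta>b\<in>barX n B Xs i. convex_on (Xs i) (\<lambda>t. g1 t \<theta>b) \<and> convex_on (Xs i) (\<lambda>t. h1 t \<theta>b)"
    using assms(1) i unfolding BDC_def by blast
  obtain g2 h2 where 2: "\<forall>\<theta>\<in>prodX n B Xs. f2 \<theta> = g2 (blk B i \<theta>) (bar B i \<theta>) - h2 (blk B i \<theta>) (bar B i \<theta>)"
    "\<forall>\<theta>b\<in>barX n B Xs i. convex_on (Xs i) (\<lambda>t. g2 t \<theta>b) \<and> convex_on (Xs i) (\<lambda>t. h2 t \<theta>b)"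
    using assms(2) i unfolding BDC_def by blast
  have eq: "max (a - b) (c - d) = max (a + d) (c + b) - (b + d)" for a b c d :: real
    by (simp add: max_def)
  show "\<exists>g h :: real^'a \<Rightarrow> real^'a \<Rightarrow> real.
        (\<forall>\<theta>\<in>prodX n B Xs. max (f1 \<theta>) (f2 \<theta>) = g (blk B i \<theta>) (bar B i \<theta>) - h (blk B i \<theta>) (bar B i \<theta>)) \<and>
        (\<forall>\<theta>b\<in>barX n B Xs i. convex_on (Xs i) (\<lambda>t. g t \<theta>b) \<and> convex_on (Xs i) (\<lambda>t. h t \<theta>b))"
    by (rule exI[of _ "\<lambda>t b. max (g1 t b + h2 t b) (g2 t b + h1 t b)"], rule exI[of _ "\<lambda>t b. h1 t b + h2 t b"])
       (use 1 2 eq in \<open>auto intro!: convex_on_add convex_on_max2\<close>)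
qed

theorem proposition3p1:
  fixes n m :: nat
    and B :: "nat \<Rightarrow> ('k::finite) set"
    and Xs :: "nat \<Rightarrow> (real^'k) set"
    and f :: "nat \<Rightarrow> real^'k \<Rightarrow> real"
    and \<alpha> :: "nat \<Rightarrow> real"
  assumes "is_block_partition n B"
    and "\<And>i. i < n \<Longrightarrow> Xs i \<subseteq> {x. \<forall>j. j \<notin> B i \<longrightarrow> x $ j = 0}"
    and "m \<ge> 1"
    and "\<And>r. r < m \<Longrightarrow> BDC n B Xs (f r)"
  shows "BDC n B Xs (\<lambda>\<theta>. \<Sum>r<m. \<alpha> r * f r \<theta>) \<and>
         BDC n B Xs (\<lambda>\<theta>. Max ((\<lambda>r. f r \<theta>) ` {..<m})) \<and>
         BDC n B Xs (\<lambda>\<theta>. Min ((\<lambda>r. f r \<theta>) ` {..<m}))"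
proof -
  have main: "BDC n B Xs (\<lambda>\<theta>. \<Sum>r<Suc k. \<alpha> r * f r \<theta>) \<and>
         BDC n B Xs (\<lambda>\<theta>. Max ((\<lambda>r. f r \<theta>) ` {..<Suc k})) \<and>
         BDC n B Xs (\<lambda>\<theta>. Min ((\<lambda>r. f r \<theta>) ` {..<Suc k}))" if "Suc k \<le> m" for k
    using that
  proof (induction k)
    case 0
    have f0: "BDC n B Xs (f 0)" using assms(4) 0 by simp
    have m0: "BDC n B Xs (\<lambda>\<theta>. f 0 \<theta>)" using f0 by (simp add: eta_contract_eq)
    show ?case using BDC_cmul[OF m0, of "\<alpha> 0"] m0 by (simp add: lessThan_Suc)
  next
    case (Suc k)
    have IH: "BDC n B Xs (\<lambda>\<theta>. \<Sum>r<Suc k. \<alpha> r * f r \<theta>)"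
         "BDC n B Xs (\<lambda>\<theta>. Max ((\<lambda>r. f r \<theta>) ` {..<Suc k}))"
         "BDC n B Xs (\<lambda>\<theta>. Min ((\<lambda>r. f r \<theta>) ` {..<Suc k}))"
      using Suc by auto
    have fk: "BDC n B Xs (\<lambda>\<theta>. f (Suc k) \<theta>)" using assms(4) Suc.prems by (simp add: eta_contract_eq)
    have s: "BDC n B Xs (\<lambda>\<theta>. \<Sum>r<Suc (Suc k). \<alpha> r * f r \<theta>)"
      using BDC_add[OF IH(1) BDC_cmul[OF fk, of "\<alpha> (Suc k)"]] by simp
    have mx: "Max ((\<lambda>r. f r \<theta>) ` {..<Suc (Suc k)}) = max (f (Suc k) \<theta>) (Max ((\<lambda>r. f r \<theta>) ` {..<Suc k}))" for \<theta>
      unfolding lessThan_Suc[of "Suc k"] image_insert by (subst Max_insert) auto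
    have mn: "Min ((\<lambda>r. f r \<theta>) ` {..<Suc (Suc k)}) = - max (- f (Suc k) \<theta>) (- Min ((\<lambda>r. f r \<theta>) ` {..<Suc k}))" for \<theta>
      unfolding lessThan_Suc[of "Suc k"] image_insert by (subst Min_insert) (auto simp: min_def max_def)
    have M: "BDC n B Xs (\<lambda>\<theta>. Max ((\<lambda>r. f r \<theta>) ` {..<Suc (Suc k)}))"
      unfolding mx using BDC_max[OF fk IH(2)] .
    have N: "BDC n B Xs (\<lambda>\<theta>. Min ((\<lambda>r. f r \<theta>) ` {..<Suc (Suc k)}))"
      unfolding mn using BDC_cmul[OF BDC_max[OF BDC_cmul[OF fk, of "-1"] BDC_cmul[OF IH(3), of "-1"]], of "-1"]
      by simp
    show ?case using s M N by blast
  qed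
  obtain k where "m = Suc k" using assms(3) by (cases m) auto
  then show ?thesis using main[of k] by simp
qed

end
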